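(* Let $n\ge 3$ and consider the Markov chain on the state space $\{0,1,\dots,n-1\}$ with the $n\times n$ transition probability matrix $\mathbf P=(P_{ij})$ given by: $P_{00}=5/6$, $P_{01}=1/6$; $P_{10}=5/6$, $P_{12}=1/6$; for $2\le i\le n-2$: $P_{i0}=2/3$, $P_{i,i-1}=1/6$, $P_{i,i+1}=1/6$; $P_{n-1,0}=5/6$, $P_{n-1,n-2}=1/6$; and all other entries $0$. Then the steady state probability vector, i.e. the unique probability vector $\vec\pi=(\pi_0,\dots,\pi_{n-1})$ with $\vec\pi=\vec\pi\mathbf P$ and $\sum_i\pi_i=1$, is $$\vec\pi=\left(\frac{2B_n}{b_{n+1}},\frac{2B_{n-1}}{b_{n+1}},\dots,\frac{2B_1}{b_{n+1}}\right),$$ that is, $\pi_i=\dfrac{2B_{n-i}}{b_{n+1}}$ for $i=0,1,\dots,n-1$.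
   Context: The balancing numbers $B_m$ are defined by $B_0=0$, $B_1=1$, $B_{m+1}=6B_m-B_{m-1}$ (so $B_2=6$, $B_3=35,\dots$). The cobalancing numbers $b_m$ are defined by $b_0=0$, $b_1=0$, $b_{m+1}=6b_m-b_{m-1}+2$ (so $b_2=2$, $b_3=14,\dots$). *)

theory Defs
  imports Complex_Main
begin

fun bal :: "nat \<Rightarrow> int" where
  "bal 0 = 0"
| "bal (Suc 0) = 1"
| "bal (Suc (Suc m)) = 6 * bal (Suc m) - bal m"

fun cobal :: "nat \<Rightarrow> int" where
  "cobal 0 = 0"
| "cobal (Suc 0) = 0"
| "cobal (Suc (Suc m)) = 6 * cobal (Suc m) - cobal m + 2"

definition trans_P :: "nat \<Rightarrow> nat \<Rightarrow> nat \<Rightarrow> real" where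
  "trans_P n i j =
    (if i \<ge> n \<or> j \<ge> n then 0
     else if i = 0 then (if j = 0 then 5/6 else if j = 1 then 1/6 else 0)
     else if i = 1 then (if j = 0 then 5/6 else if j = 2 then 1/6 else 0)
     else if i = n - 1 then (if j = 0 then 5/6 else if j = n - 2 then 1/6 else 0)
     else (if j = 0 then 2/3 else if j = i - 1 then 1/6 else if j = i + 1 then 1/6 else 0))"

definition stationary_prob :: "nat \<Rightarrow> (nat \<Rightarrow> real) \<Rightarrow> bool" where
  "stationary_prob n \<pi> \<longleftrightarrow>
     (\<forall>i<n. \<pi> i \<ge> 0) \<and> (\<Sum>i<n. \<pi> i) = 1 \<and>
     (\<forall>j<n. \<pi> j = (\<Sum>i<n. \<pi> i * trans_P n i j))"

end

theory Submission
  imports Defs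
begin

lemma P_col:
  assumes "1 \<le> j" "j < n" "i < n"
  shows "trans_P n i j = (if i = j - 1 then 1/6 else 0) + (if i = j + 1 then 1/6 else 0)"
proof -
  consider "i = 0" | "i = 1" | "i \<noteq> 0" "i \<noteq> 1" "i = n - 1" | "i \<noteq> 0" "i \<noteq> 1" "i \<noteq> n - 1" by blast
  then show ?thesis
  proof cases
    case 1 then show ?thesis using assms unfolding trans_P_def by simp
  next
    case 2 then show ?thesis using assms unfolding trans_P_def by (simp, arith)
  next
    case 3 then show ?thesis using assms unfolding trans_P_def by (simp split: if_split, arith)
  next
    case 4 then show ?thesis using assms unfolding trans_P_def by (simp split: if_split, arith)
  qed
qed

lemma P_row:
  assumes "i < n" "3 \<le> n"
  shows "(\<Sum>j<n. trans_P n i j) = 1"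
proof -
  have A: "(\<Sum>j<n. (if j = a then c else (0::real))) = (if a < n then c else 0)" for a c
    by (simp add: sum.delta)
  show ?thesis
  proof (cases "i = 0")
    case True
    have "\<And>j. j<n \<Longrightarrow> trans_P n i j = (if j = 0 then 5/6 else 0) + (if j = 1 then 1/6 else 0)"
      using True assms unfolding trans_P_def by auto
    then have "(\<Sum>j<n. trans_P n i j) = (\<Sum>j<n. (if j = 0 then 5/6 else 0) + (if j = 1 then 1/6 else (0::real)))"
      by (intro sum.cong) auto
    also have "\<dots> = 1" using assms by (simp only: sum.distrib A) simp
    finally show ?thesis .
  next
    case F0: False
    show ?thesis
    proof (cases "i = 1")
      case True
      have "\<And>j. j<n \<Longrightarrow> trans_P n i j = (if j = 0 then 5/6 else 0) + (if j = 2 then 1/6 else 0)"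
        using True assms unfolding trans_P_def by auto
      then have "(\<Sum>j<n. trans_P n i j) = (\<Sum>j<n. (if j = 0 then 5/6 else 0) + (if j = 2 then 1/6 else (0::real)))"
        by (intro sum.cong) auto
      also have "\<dots> = 1" using assms by (simp only: sum.distrib A) simp
      finally show ?thesis .
    next
      case F1: False
      show ?thesis
      proof (cases "i = n - 1")
        case True
        have "\<And>j. j<n \<Longrightarrow> trans_P n i j = (if j = 0 then 5/6 else 0) + (if j = n - 2 then 1/6 else 0)"
          using True F0 F1 assms unfolding trans_P_def by auto
        then have "(\<Sum>j<n. trans_P n i j) = (\<Sum>j<n. (if j = 0 then 5/6 else 0) + (if j = n - 2 then 1/6 else (0::real)))"
          by (intro sum.cong) auto
        also have "\<dots> = 1" using assms by (simp only: sum.distrib A) simp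
        finally show ?thesis .
      next
        case False
        have "\<And>j. j<n \<Longrightarrow> trans_P n i j = (if j = 0 then 2/3 else 0) + (if j = i - 1 then 1/6 else 0)
            + (if j = i + 1 then 1/6 else 0)"
          using False F0 F1 assms unfolding trans_P_def by auto
        then have "(\<Sum>j<n. trans_P n i j) = (\<Sum>j<n. (if j = 0 then 2/3 else 0) + (if j = i - 1 then 1/6 else 0)
            + (if j = i + 1 then 1/6 else (0::real)))"
          by (intro sum.cong) auto
        also have "\<dots> = 1" using assms F0 F1 False by (simp only: sum.distrib A) auto
        finally show ?thesis .
      qed
    qed
  qed
qed

lemma col_sum:
  fixes \<pi> :: "nat \<Rightarrow> real"
  assumes "1 \<le> j" "j < n"
  shows "(\<Sum>i<n. \<pi> i * trans_P n i j) = (\<pi> (j - 1) + (if j + 1 < n then \<pi> (j + 1) else 0)) / 6"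
proof -
  have "(\<Sum>i<n. \<pi> i * trans_P n i j) =
     (\<Sum>i<n. (if i = j - 1 then \<pi> (j - 1) / 6 else 0) + (if i = j + 1 then \<pi> (j+1) / 6 else 0))"
    using assms by (intro sum.cong) (auto simp: P_col)
  also have "\<dots> = (\<pi> (j - 1) + (if j + 1 < n then \<pi> (j + 1) else 0)) / 6"
    using assms by (auto simp add: sum.distrib sum.delta)
  finally show ?thesis .
qed

lemma cobal_diff: "cobal (Suc m) - cobal m = 2 * bal m"
  by (induction m rule: bal.induct) auto

lemma bal_mono: "0 \<le> bal m \<and> bal m \<le> bal (Suc m)"
  by (induction m rule: bal.induct) auto

lemma bal_sum: "2 * (\<Sum>k\<in>{1..m}. bal k) = cobal (Suc m)"
proof (induction m)
  case 0 then show ?case by simp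
next
  case (Suc m)
  then show ?case using cobal_diff[of "Suc m"] by (simp add: algebra_simps)
qed

lemma rev_sum: "(\<Sum>i<(n::nat). f (n - i)) = (\<Sum>k\<in>{1..n}. (f k :: 'a::comm_monoid_add))"
proof (induction n)
  case 0 then show ?case by simp
next
  case (Suc n)
  have "(\<Sum>i<Suc n. f (Suc n - i)) = f (Suc n) + (\<Sum>i<n. f (n - i))"
    by (subst sum.lessThan_Suc_shift) simp
  also have "\<dots> = (\<Sum>k\<in>{1..Suc n}. f k)" using Suc by (simp add: add.commute)
  finally show ?case .
qed

theorem theorem2p1:
  fixes n :: nat
  assumes "n \<ge> 3"
  shows "\<forall>\<pi> :: nat \<Rightarrow> real. stationary_prob n \<pi> \<longleftrightarrow>
           (\<forall>i<n. \<pi> i = 2 * real_of_int (bal (n - i)) / real_of_int (cobal (n + 1)))"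
proof -
  define b where "b = real_of_int (cobal (n + 1))"
  have sumB: "(\<Sum>i<n. real_of_int (bal (n - i))) = b / 2"
  proof -
    have "(\<Sum>i<n. real_of_int (bal (n - i))) = real_of_int (\<Sum>k\<in>{1..n}. bal k)"
      by (simp add: rev_sum[of "\<lambda>k. real_of_int (bal k)"])
    also have "\<dots> = b / 2" unfolding b_def
      using arg_cong[OF bal_sum[of n], of real_of_int] by simp
    finally show ?thesis .
  qed
  have bpos: "b > 0"
  proof -
    have "(\<Sum>k\<in>{1..n}. bal k) \<ge> bal 1"
      using assms bal_mono by (intro member_le_sum) auto
    then show ?thesis unfolding b_def using bal_sum[of n] by simp
  qed
  show ?thesis
  proof (rule allI, rule iffI)
    fix \<pi> :: "nat \<Rightarrow> real"
    assume st: "stationary_prob n \<pi>"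
    define p where "p i = (if i < n then \<pi> i else 0)" for i
    have eq: "\<pi> (j - 1) = 6 * \<pi> j - p (j + 1)" if "1 \<le> j" "j < n" for j
    proof -
      have "\<pi> j = (\<Sum>i<n. \<pi> i * trans_P n i j)" using st that unfolding stationary_prob_def by blast
      then show ?thesis using col_sum[OF that, of \<pi>] unfolding p_def by auto
    qed
    have key: "k \<le> n \<longrightarrow> p (n - k) = real_of_int (bal k) * p (n - 1) \<and>
        (Suc k \<le> n \<longrightarrow> p (n - Suc k) = real_of_int (bal (Suc k)) * p (n - 1))" for k
    proof (induction k)
      case 0 then show ?case unfolding p_def by simp
    next
      case (Suc k)
      show ?case
      proof (intro impI conjI)
        assume "Suc k \<le> n" then show "p (n - Suc k) = real_of_int (bal (Suc k)) * p (n - 1)"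
          using Suc by simp
      next
        assume h: "Suc (Suc k) \<le> n"
        have e: "\<pi> (n - Suc k - 1) = 6 * \<pi> (n - Suc k) - p (n - Suc k + 1)"
          using eq[of "n - Suc k"] h by simp
        have "p (n - Suc (Suc k)) = \<pi> (n - Suc k - 1)" unfolding p_def using h by simp
        also have "\<dots> = 6 * p (n - Suc k) - p (n - k)" using e h unfolding p_def
          by (simp add: Suc_diff_Suc)
        also have "\<dots> = real_of_int (bal (Suc (Suc k))) * p (n - 1)"
          using Suc h by (simp add: algebra_simps)
        finally show "p (n - Suc (Suc k)) = real_of_int (bal (Suc (Suc k))) * p (n - 1)" .
      qed
    qed
    have form: "\<pi> i = real_of_int (bal (n - i)) * p (n - 1)" if "i < n" for i
      using key[of "n - i"] that unfolding p_def by (auto split: if_splits)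
    have "1 = (\<Sum>i<n. \<pi> i)" using st unfolding stationary_prob_def by (metis (no_types))
    also have "\<dots> = (\<Sum>i<n. real_of_int (bal (n - i))) * p (n - 1)"
      by (simp add: form sum_distrib_right)
    finally have "p (n - 1) = 2 / b" using sumB bpos by (simp add: field_simps)
    then show "\<forall>i<n. \<pi> i = 2 * real_of_int (bal (n - i)) / real_of_int (cobal (n + 1))"
      using form unfolding b_def by simp
  next
    fix \<pi> :: "nat \<Rightarrow> real"
    assume h: "\<forall>i<n. \<pi> i = 2 * real_of_int (bal (n - i)) / real_of_int (cobal (n + 1))"
    define r where "r i = 2 * real_of_int (bal (n - i)) / b" for i
    have pr: "\<pi> i = r i" if "i < n" for i using h that unfolding r_def b_def by simp
    have nn: "\<forall>i<n. \<pi> i \<ge> 0" using pr bpos bal_mono unfolding r_def by simp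
    have s1: "(\<Sum>i<n. \<pi> i) = 1"
    proof -
      have "(\<Sum>i<n. \<pi> i) = (\<Sum>i<n. r i)" by (simp add: pr)
      also have "\<dots> = 2 * (\<Sum>i<n. real_of_int (bal (n - i))) / b"
        unfolding r_def by (simp add: sum_divide_distrib sum_distrib_left)
      also have "\<dots> = 1" using sumB bpos by simp
      finally show ?thesis .
    qed
    have eqj: "\<pi> j = (\<Sum>i<n. \<pi> i * trans_P n i j)" if j12: "1 \<le> j" "j < n" for j
    proof -
      have rn: "r n = 0" unfolding r_def by simp
      obtain m where m: "n - j = Suc m" using j12 by (cases "n - j") auto
      have m1: "n - (j - 1) = Suc (Suc m)" using m j12 by simp
      have m2: "n - (j + 1) = m" using m by simp
      have rec: "6 * r j = r (j - 1) + r (j + 1)"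
        unfolding r_def m m1 m2 bal.simps(3) by (simp add: diff_divide_distrib add_divide_distrib)
      have a1: "(if j + 1 < n then \<pi> (j + 1) else 0) = r (j + 1)"
      proof (cases "j + 1 < n")
        case True then show ?thesis using pr by simp
      next
        case False then have "j + 1 = n" using j12 by simp
        then show ?thesis using rn False by simp
      qed
      have a2: "\<pi> (j - 1) = r (j - 1)" using pr j12 by simp
      have a3: "\<pi> j = r j" using pr j12 by simp
      have "(\<Sum>i<n. \<pi> i * trans_P n i j) = (r (j - 1) + r (j + 1)) / 6"
        using col_sum[OF j12, of \<pi>] unfolding a1 a2 .
      then show ?thesis unfolding a3 using rec by simp
    qed
    have eq0: "\<pi> 0 = (\<Sum>i<n. \<pi> i * trans_P n i 0)"
    proof -
      have split: "{..<n} = insert 0 {1..<n}" using assms by auto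
      have row: "trans_P n i 0 = 1 - (\<Sum>j\<in>{1..<n}. trans_P n i j)" if "i < n" for i
        using P_row[OF that assms] split by simp
      have "(\<Sum>i<n. \<pi> i * trans_P n i 0) = (\<Sum>i<n. \<pi> i) - (\<Sum>i<n. \<Sum>j\<in>{1..<n}. \<pi> i * trans_P n i j)"
      proof -
        have "(\<Sum>i<n. \<pi> i * trans_P n i 0) = (\<Sum>i<n. \<pi> i - (\<Sum>j\<in>{1..<n}. \<pi> i * trans_P n i j))"
        proof (rule sum.cong[OF refl])
          fix i assume "i \<in> {..<n}"
          then have "trans_P n i 0 = 1 - (\<Sum>j\<in>{1..<n}. trans_P n i j)" using row by simp
          then show "\<pi> i * trans_P n i 0 = \<pi> i - (\<Sum>j\<in>{1..<n}. \<pi> i * trans_P n i j)"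
            by (simp only: right_diff_distrib sum_distrib_left mult_1_right)
        qed
        then show ?thesis by (simp only: sum_subtractf)
      qed
      also have "\<dots> = 1 - (\<Sum>j\<in>{1..<n}. \<Sum>i<n. \<pi> i * trans_P n i j)"
        unfolding s1 by (subst sum.swap) (rule refl)
      also have "\<dots> = 1 - (\<Sum>j\<in>{1..<n}. \<pi> j)"
      proof -
        have "(\<Sum>j\<in>{1..<n}. \<Sum>i<n. \<pi> i * trans_P n i j) = (\<Sum>j\<in>{1..<n}. \<pi> j)"
          by (rule sum.cong[OF refl]) (metis eqj atLeastLessThan_iff Suc_leI One_nat_def)
        then show ?thesis by (simp only:)
      qed
      also have "\<dots> = \<pi> 0" using s1 split by simp
      finally show ?thesis by simp
    qed
    show "stationary_prob n \<pi>" unfolding stationary_prob_def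
    proof (intro conjI nn s1 allI impI)
      fix j assume "j < n"
      then show "\<pi> j = (\<Sum>i<n. \<pi> i * trans_P n i j)"
      proof (cases "j = 0")
        case True show ?thesis unfolding True by (rule eq0)
      next
        case False then show ?thesis using \<open>j < n\<close> by (intro eqj) auto
      qed
    qed
  qed
qed

end
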